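(* Let $\lvert\psi\rangle$ be an $n$-qubit pure state. Then \[ \frac{4 \eta - 1}{3} \leq F_\mathcal{S}(\lvert\psi\rangle). \]
   Context: For $x=(a,b)\in\mathbb F_2^{2n}$ the Weyl operator is $W_x = i^{a\cdot b}X^{a_1}Z^{b_1}\otimes\cdots\otimes X^{a_n}Z^{b_n}$. For an $n$-qubit pure state $\lvert\psi\rangle$, $p_\psi(x)=2^{-n}\langle\psi|W_x|\psi\rangle^2$ (a probability distribution on $\mathbb F_2^{2n}$), $q_\psi(x)=\sum_y p_\psi(y)p_\psi(x+y)$, and $\eta \coloneqq \mathbb{E}_{x\sim q_\psi}[2^n p_\psi(x)] = 4^n\sum_{x\in\mathbb F_2^{2n}} p_\psi(x)^3$. The stabilizer fidelity is $F_\mathcal{S}(\lvert\psi\rangle)=\max_{\lvert\phi\rangle\text{ stabilizer}}\lvert\langle\phi|\psi\rangle\rvert^2$. *)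

theory Defs
  imports Complex_Main
begin

text \<open>Computational basis of n qubits: bit strings of length n (qubit i is entry i).
  A state vector is a function from bit strings to complex amplitudes; only the values
  on bit strings of length n matter.\<close>

definition bits :: "nat \<Rightarrow> bool list set" where
  "bits n = {xs. length xs = n}"

text \<open>The index set F_2^{2n} of Weyl operators: pairs (a,b) of bit strings of length n.\<close>
definition weyl_index :: "nat \<Rightarrow> (bool list \<times> bool list) set" where
  "weyl_index n = bits n \<times> bits n"

definition bxor :: "bool list \<Rightarrow> bool list \<Rightarrow> bool list" where
  "bxor u v = map2 (\<noteq>) u v"

definition bdot :: "bool list \<Rightarrow> bool list \<Rightarrow> nat" where
  "bdot u v = length (filter id (map2 (\<and>) u v))"

definition padd :: "bool list \<times> bool list \<Rightarrow> bool list \<times> bool list \<Rightarrow> bool list \<times> bool list" where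
  "padd x y = (bxor (fst x) (fst y), bxor (snd x) (snd y))"

text \<open>W_(a,b) = i^(a.b) X^a1 Z^b1 (x) ... (x) X^an Z^bn applied to a state:
  (X^a Z^b psi)(y) = (-1)^(b.(y+a)) psi(y+a).\<close>
definition weyl :: "bool list \<times> bool list \<Rightarrow> (bool list \<Rightarrow> complex) \<Rightarrow> (bool list \<Rightarrow> complex)" where
  "weyl x \<psi> = (\<lambda>y. \<i> ^ bdot (fst x) (snd x) * (-1) ^ bdot (snd x) (bxor y (fst x))
                   * \<psi> (bxor y (fst x)))"

definition inner :: "nat \<Rightarrow> (bool list \<Rightarrow> complex) \<Rightarrow> (bool list \<Rightarrow> complex) \<Rightarrow> complex" where
  "inner n \<phi> \<psi> = (\<Sum>y\<in>bits n. cnj (\<phi> y) * \<psi> y)"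

definition pure_state :: "nat \<Rightarrow> (bool list \<Rightarrow> complex) \<Rightarrow> bool" where
  "pure_state n \<psi> \<longleftrightarrow> inner n \<psi> \<psi> = 1"

text \<open>p_psi(x) = 2^(-n) <psi|W_x|psi>^2 (the expectation value is real since W_x is Hermitian).\<close>
definition char_dist :: "nat \<Rightarrow> (bool list \<Rightarrow> complex) \<Rightarrow> bool list \<times> bool list \<Rightarrow> real" where
  "char_dist n \<psi> x = (cmod (inner n \<psi> (weyl x \<psi>)))\<^sup>2 / 2 ^ n"

definition conv_dist :: "nat \<Rightarrow> (bool list \<Rightarrow> complex) \<Rightarrow> bool list \<times> bool list \<Rightarrow> real" where
  "conv_dist n \<psi> x = (\<Sum>y\<in>weyl_index n. char_dist n \<psi> y * char_dist n \<psi> (padd x y))"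

text \<open>eta = E_{x ~ q_psi} [2^n p_psi(x)].\<close>
definition eta :: "nat \<Rightarrow> (bool list \<Rightarrow> complex) \<Rightarrow> real" where
  "eta n \<psi> = (\<Sum>x\<in>weyl_index n. conv_dist n \<psi> x * (2 ^ n * char_dist n \<psi> x))"

definition stabilizer_state :: "nat \<Rightarrow> (bool list \<Rightarrow> complex) \<Rightarrow> bool" where
  "stabilizer_state n \<phi> \<longleftrightarrow> pure_state n \<phi> \<and>
     (\<exists>M \<subseteq> weyl_index n. card M = 2 ^ n \<and>
        (\<forall>x\<in>M. \<exists>s\<in>{1, -1::complex}. \<forall>y\<in>bits n. s * weyl x \<phi> y = \<phi> y))"

definition stabilizer_fidelity :: "nat \<Rightarrow> (bool list \<Rightarrow> complex) \<Rightarrow> real" where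
  "stabilizer_fidelity n \<psi> = Sup {(cmod (inner n \<phi> \<psi>))\<^sup>2 | \<phi>. stabilizer_state n \<phi>}"

end

theory Submission
  imports Defs "HOL-Analysis.Convex"
begin

lemma bits_iff[simp]: "xs \<in> bits n \<longleftrightarrow> length xs = n" by (simp add: bits_def)
lemma finite_bits[simp]: "finite (bits n)"
  unfolding bits_def using finite_lists_length_eq[of "UNIV::bool set" n] by simp
lemma bits_Suc: "bits (Suc n) = (\<lambda>b. True # b) ` bits n \<union> (\<lambda>b. False # b) ` bits n"
  by (auto simp: bits_def length_Suc_conv image_iff)
lemma sum_bits_Suc: "sum f (bits (Suc n)) = (\<Sum>b\<in>bits n. f (True # b)) + (\<Sum>b\<in>bits n. f (False # b))"
proof -
  have "sum f (bits (Suc n)) = sum f ((\<lambda>b. True # b) ` bits n) + sum f ((\<lambda>b. False # b) ` bits n)"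
    unfolding bits_Suc by (rule sum.union_disjoint) auto
  also have "\<dots> = (\<Sum>b\<in>bits n. f (True # b)) + (\<Sum>b\<in>bits n. f (False # b))"
    by (subst sum.reindex, simp add: inj_on_def)+ simp
  finally show ?thesis .
qed

lemma length_bxor[simp]: "length (bxor u v) = min (length u) (length v)"
  by (simp add: bxor_def)
lemma bxor_Cons[simp]: "bxor (x#xs) (y#ys) = (x \<noteq> y) # bxor xs ys" by (simp add: bxor_def)
lemma bxor_Nil[simp]: "bxor [] v = []" "bxor u [] = []" by (simp_all add: bxor_def)
lemma bdot_Cons[simp]: "bdot (x#xs) (y#ys) = (if x \<and> y then 1 else 0) + bdot xs ys" by (simp add: bdot_def)
lemma bdot_Nil[simp]: "bdot [] v = 0" "bdot u [] = 0" by (simp_all add: bdot_def)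

lemma bxor_comm: "bxor u v = bxor v u"
  by (induction u arbitrary: v) (auto simp: neq_Nil_conv, case_tac v, auto)
lemma bdot_comm: "bdot u v = bdot v u"
  by (induction u arbitrary: v) (simp, case_tac v, auto)
lemma bxor_assoc: "bxor (bxor u v) w = bxor u (bxor v w)"
  by (induction u arbitrary: v w) (simp, case_tac v, simp, case_tac w, auto)
lemma bxor_self: "bxor u u = replicate (length u) False"
  by (induction u) auto
lemma bxor_zero: "length u \<le> m \<Longrightarrow> bxor u (replicate m False) = u"
  by (induction u arbitrary: m) (simp, case_tac m, auto)
lemma bxor_zero': "length u \<le> m \<Longrightarrow> bxor (replicate m False) u = u"
  by (subst bxor_comm, rule bxor_zero)
lemma bxor_cancel: "length u = length v \<Longrightarrow> bxor (bxor u v) v = u"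
  by (simp add: bxor_assoc bxor_self bxor_zero)
lemma bxor_cancel': "length u = length v \<Longrightarrow> bxor v (bxor v u) = u"
  by (simp add: bxor_assoc[symmetric] bxor_self bxor_zero')
lemma bxor_eq_zero: "length u = length v \<Longrightarrow> bxor u v = replicate (length u) False \<longleftrightarrow> u = v"
  by (induction u v rule: list_induct2) auto
lemma bdot_zero1[simp]: "bdot (replicate m False) v = 0"
  by (induction v arbitrary: m) (simp, case_tac m, auto)
lemma bdot_zero2[simp]: "bdot v (replicate m False) = 0"
  by (induction v arbitrary: m) (simp, case_tac m, auto)

lemma pm_bdot_bxor0: "length u = length v \<Longrightarrow> length v = length w \<Longrightarrow>
  (-1::'a::comm_ring_1) ^ bdot (bxor u v) w = (-1) ^ bdot u w * (-1) ^ bdot v w"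
proof (induction u v w rule: list_induct3)
  case (Cons x xs y ys z zs)
  then show ?case by (auto simp: power_add)
qed simp
lemma pm_bdot_bxor: "length u = length w \<Longrightarrow> length v = length w \<Longrightarrow>
  (-1::'a::comm_ring_1) ^ bdot (bxor u v) w = (-1) ^ bdot u w * (-1) ^ bdot v w"
  by (rule pm_bdot_bxor0) auto
lemma pm_bdot_bxor2: "length u = length w \<Longrightarrow> length v = length w \<Longrightarrow>
  (-1::'a::comm_ring_1) ^ bdot w (bxor u v) = (-1) ^ bdot w u * (-1) ^ bdot w v"
  by (metis bdot_comm pm_bdot_bxor)

lemma sum_pm_bits: "length v = n \<Longrightarrow>
  (\<Sum>b\<in>bits n. (-1::complex) ^ bdot b v) = (if v = replicate n False then 2 ^ n else 0)"
proof (induction n arbitrary: v)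
  case 0 then show ?case by (simp add: bits_def)
next
  case (Suc n)
  then obtain h v' where v: "v = h # v'" "length v' = n" by (cases v) auto
  have "(\<Sum>b\<in>bits (Suc n). (-1::complex) ^ bdot b v) = (1 + (-1) ^ (if h then 1 else 0)) * (\<Sum>b\<in>bits n. (-1::complex) ^ bdot b v')"
    by (simp add: sum_bits_Suc v power_add sum_distrib_left algebra_simps sum.distrib)
  then show ?case using Suc.IH[OF v(2)] v by auto
qed

lemma bij_bxor: "a \<in> bits n \<Longrightarrow> bij_betw (\<lambda>u. bxor u a) (bits n) (bits n)"
  by (rule bij_betw_byWitness[where f'="\<lambda>u. bxor u a"]) (auto simp: bxor_cancel)
lemma sum_bxor: "a \<in> bits n \<Longrightarrow> (\<Sum>u\<in>bits n. g (bxor u a)) = (\<Sum>u\<in>bits n. g u)"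
  using sum.reindex_bij_betw[OF bij_bxor, of a n g] by simp


definition zn :: "nat \<Rightarrow> bool list \<times> bool list" where "zn n = (replicate n False, replicate n False)"
definition Iph :: "bool list \<times> bool list \<Rightarrow> complex" where "Iph x = \<i> ^ bdot (fst x) (snd x)"
definition om :: "bool list \<times> bool list \<Rightarrow> bool list \<times> bool list \<Rightarrow> complex" where
  "om x y = Iph x * Iph y * (-1) ^ bdot (snd x) (fst y) / Iph (padd x y)"
definition sp :: "bool list \<times> bool list \<Rightarrow> bool list \<times> bool list \<Rightarrow> nat" where
  "sp x y = bdot (snd x) (fst y) + bdot (fst x) (snd y)"

lemma V_iff: "x \<in> weyl_index n \<longleftrightarrow> length (fst x) = n \<and> length (snd x) = n"
  by (cases x) (simp add: weyl_index_def)
lemma finite_V[simp]: "finite (weyl_index n)" by (simp add: weyl_index_def)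
lemma zn_V[simp]: "zn n \<in> weyl_index n" by (simp add: V_iff zn_def)
lemma padd_V[simp]: "x \<in> weyl_index n \<Longrightarrow> y \<in> weyl_index n \<Longrightarrow> padd x y \<in> weyl_index n"
  by (simp add: V_iff padd_def)
lemma padd_comm: "padd x y = padd y x" by (simp add: padd_def bxor_comm)
lemma padd_assoc: "padd (padd x y) z = padd x (padd y z)" by (simp add: padd_def bxor_assoc)
lemma padd_self: "x \<in> weyl_index n \<Longrightarrow> padd x x = zn n" by (simp add: padd_def zn_def V_iff bxor_self)
lemma padd_zn: "x \<in> weyl_index n \<Longrightarrow> padd x (zn n) = x"
  by (cases x) (simp add: padd_def zn_def V_iff bxor_zero)
lemma padd_zn': "x \<in> weyl_index n \<Longrightarrow> padd (zn n) x = x"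
  by (metis padd_comm padd_zn)
lemma padd_cancel: "x \<in> weyl_index n \<Longrightarrow> y \<in> weyl_index n \<Longrightarrow> padd x (padd x y) = y"
  by (simp add: padd_assoc[symmetric] padd_self padd_zn')
lemma padd_cancel2: "x \<in> weyl_index n \<Longrightarrow> y \<in> weyl_index n \<Longrightarrow> padd (padd y x) x = y"
  by (simp add: padd_assoc padd_self padd_zn)
lemma padd_eq_zn: "x \<in> weyl_index n \<Longrightarrow> y \<in> weyl_index n \<Longrightarrow> padd x y = zn n \<longleftrightarrow> x = y"
  by (metis padd_cancel padd_self padd_zn)

lemma pm_sq: "(-1::'a::comm_ring_1) ^ k * (-1) ^ k = 1"
  by (induction k) auto
lemma pm_sq': "(-1::'a::comm_ring_1) ^ k * ((-1) ^ k * z) = z"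
  by (simp add: mult.assoc[symmetric] pm_sq)
lemma pm_inv: "inverse ((-1::complex) ^ k) = (-1) ^ k"
  by (metis inverse_unique pm_sq)
lemma Iph_nz[simp]: "Iph x \<noteq> 0" by (simp add: Iph_def)
lemma Iph_sq: "Iph x * Iph x = (-1) ^ bdot (fst x) (snd x)"
  by (simp add: Iph_def power_mult_distrib[symmetric])
lemma cnj_i: "cnj (\<i>^k) * \<i>^k = 1"
  by (induction k) (auto simp: field_simps)
lemma cnj_Iph: "cnj (Iph x) * Iph x = 1"
  unfolding Iph_def by (rule cnj_i)
lemma Iph_zn[simp]: "Iph (zn n) = 1" by (simp add: Iph_def zn_def)

lemma mult_key: "\<And>A B J q p1 p2 p3 p4 p5 F. J \<noteq> 0 \<Longrightarrow> q*q = (1::complex) \<Longrightarrow>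
     A*(p1*p2)*(B*(p3*(p4*p5))*F) = A*B*q*(J*(p1*p3*(p2*p4*(q*p5)))*F)/J"
proof -
  fix A B J q p1 p2 p3 p4 p5 F :: complex
  assume "J \<noteq> 0" "q*q = 1"
  then have "A*B*q*(J*(p1*p3*(p2*p4*(q*p5)))*F)/J = A*B*(q*q)*(p1*p2*p3*p4*p5*F)"
    by (simp add: field_simps)
  then show "A*(p1*p2)*(B*(p3*(p4*p5))*F) = A*B*q*(J*(p1*p3*(p2*p4*(q*p5)))*F)/J"
    using \<open>q*q = 1\<close> by (simp add: ac_simps)
qed

lemma weyl_mult:
  assumes x: "x \<in> weyl_index n" and y: "y \<in> weyl_index n" and u: "u \<in> bits n"
  shows "weyl x (weyl y \<phi>) u = om x y * weyl (padd x y) \<phi> u"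
proof -
  obtain a b where xab: "x = (a,b)" by (cases x)
  obtain a' b' where yab: "y = (a',b')" by (cases y)
  have l: "length a = n" "length b = n" "length a' = n" "length b' = n" "length u = n"
    using x y u by (auto simp: xab yab V_iff)
  have e1: "bxor (bxor u a) a' = bxor u (bxor a a')" by (simp add: bxor_assoc)
  show ?thesis
    unfolding xab yab weyl_def om_def padd_def
    apply (simp add: e1 l pm_bdot_bxor pm_bdot_bxor2 Iph_def[symmetric])
    apply (simp only: Iph_def fst_conv snd_conv)
    apply (rule mult_key)
     apply (simp only: power_not_zero complex_i_not_zero not_False_eq_True)
    apply (rule pm_sq)
    done
qed

lemma weyl_zn: "u \<in> bits n \<Longrightarrow> weyl (zn n) \<phi> u = \<phi> u"
  by (simp add: weyl_def zn_def bxor_zero)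
lemma weyl_cong: "(\<And>v. v \<in> bits n \<Longrightarrow> \<phi> v = \<chi> v) \<Longrightarrow> x \<in> weyl_index n \<Longrightarrow> u \<in> bits n
  \<Longrightarrow> weyl x \<phi> u = weyl x \<chi> u"
  by (simp add: weyl_def V_iff)
lemma weyl_scale: "weyl x (\<lambda>v. c * \<phi> v) u = c * weyl x \<phi> u"
  by (simp add: weyl_def algebra_simps)
lemma weyl_add: "weyl x (\<lambda>v. \<phi> v + \<chi> v) u = weyl x \<phi> u + weyl x \<chi> u"
  by (simp add: weyl_def algebra_simps)
lemma weyl_sum: "weyl x (\<lambda>v. \<Sum>i\<in>I. g i v) u = (\<Sum>i\<in>I. weyl x (g i) u)"
  by (simp add: weyl_def sum_distrib_left)

lemma sp_comm: "sp x y = sp y x" by (simp add: sp_def bdot_comm)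
lemma sp_zn[simp]: "sp (zn n) y = 0" "sp y (zn n) = 0" by (simp_all add: sp_def zn_def)
lemma pm_sp_self: "(-1::'a::comm_ring_1) ^ sp x x = 1"
  by (simp add: sp_def bdot_comm power_add pm_sq)
lemma pm_sp_padd: "x \<in> weyl_index n \<Longrightarrow> y \<in> weyl_index n \<Longrightarrow> z \<in> weyl_index n \<Longrightarrow>
  (-1::'a::comm_ring_1) ^ sp (padd x y) z = (-1) ^ sp x z * (-1) ^ sp y z"
  by (simp add: sp_def padd_def V_iff power_add pm_bdot_bxor)
lemma pm_sp_padd2: "x \<in> weyl_index n \<Longrightarrow> y \<in> weyl_index n \<Longrightarrow> z \<in> weyl_index n \<Longrightarrow>
  (-1::'a::comm_ring_1) ^ sp z (padd x y) = (-1) ^ sp z x * (-1) ^ sp z y"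
  by (metis sp_comm pm_sp_padd)

lemma om_self: "x \<in> weyl_index n \<Longrightarrow> om x x = 1"
  by (simp add: om_def padd_self Iph_sq bdot_comm pm_sq)
lemma om_zn1: "y \<in> weyl_index n \<Longrightarrow> om (zn n) y = 1"
  by (simp add: om_def padd_zn' zn_def[symmetric]) (simp add: zn_def)
lemma om_zn2: "y \<in> weyl_index n \<Longrightarrow> om y (zn n) = 1"
  by (simp add: om_def padd_zn) (simp add: zn_def)

lemma Iph_padd_sq: assumes "x \<in> weyl_index n" "y \<in> weyl_index n"
  shows "Iph (padd x y) * Iph (padd x y) = (-1) ^ bdot (fst x) (snd x) * (-1) ^ bdot (fst x) (snd y)
     * ((-1) ^ bdot (fst y) (snd x) * (-1) ^ bdot (fst y) (snd y))"
proof -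
  obtain a b a' b' where xy: "x = (a,b)" "y = (a',b')" by (cases x, cases y)
  have l: "length a = n" "length b = n" "length a' = n" "length b' = n" using assms by (auto simp: xy V_iff)
  show ?thesis unfolding xy Iph_sq by (simp add: padd_def l pm_bdot_bxor pm_bdot_bxor2)
qed

lemma om_swap1: assumes x: "x \<in> weyl_index n" and y: "y \<in> weyl_index n"
  shows "om x y * om y x = 1"
proof -
  define J where "J = Iph (padd x y)"
  have J0: "J \<noteq> 0" by (simp add: J_def)
  have "om x y * om y x = (Iph x * Iph x) * (Iph y * Iph y) * ((-1)^bdot (snd x) (fst y) * (-1)^bdot (snd y) (fst x)) / (J*J)"
    by (simp add: om_def J_def padd_comm field_simps)
  also have "\<dots> = (J*J) / (J*J)"
    unfolding J_def Iph_padd_sq[OF x y] unfolding Iph_sq by (simp add: bdot_comm ac_simps)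
  also have "\<dots> = 1" using J0 by simp
  finally show ?thesis .
qed

lemma om_swap2: assumes x: "x \<in> weyl_index n" and y: "y \<in> weyl_index n"
  shows "om x y = (-1) ^ sp x y * om y x"
proof -
  define R where "R = Iph x * Iph y / Iph (padd x y)"
  have 1: "om x y = (-1)^bdot (snd x) (fst y) * R" by (simp add: om_def R_def)
  have 2: "om y x = (-1)^bdot (fst x) (snd y) * R" by (simp add: om_def R_def padd_comm bdot_comm mult.commute)
  show ?thesis unfolding 1 2 sp_def power_add by (simp add: pm_sq' mult.assoc)
qed

lemma om_cocycle: assumes x: "x \<in> weyl_index n" and y: "y \<in> weyl_index n" and z: "z \<in> weyl_index n"
  shows "om x y * om (padd x y) z = om y z * om x (padd y z)"
proof -
  have b1: "(-1::complex) ^ bdot (snd (padd x y)) (fst z) = (-1) ^ bdot (snd x) (fst z) * (-1) ^ bdot (snd y) (fst z)"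
    using x y z by (simp add: padd_def V_iff pm_bdot_bxor)
  have b2: "(-1::complex) ^ bdot (snd x) (fst (padd y z)) = (-1) ^ bdot (snd x) (fst y) * (-1) ^ bdot (snd x) (fst z)"
    using x y z by (simp add: padd_def V_iff pm_bdot_bxor2)
  have "om x y * om (padd x y) z = Iph x * Iph y * Iph z * ((-1) ^ bdot (snd x) (fst y) * (-1) ^ bdot (snd (padd x y)) (fst z)) / Iph (padd (padd x y) z)"
    by (simp add: om_def field_simps)
  also have "\<dots> = Iph x * Iph y * Iph z * ((-1) ^ bdot (snd y) (fst z) * (-1) ^ bdot (snd x) (fst (padd y z))) / Iph (padd x (padd y z))"
    unfolding b1 b2 padd_assoc by (simp add: ac_simps)
  also have "\<dots> = om y z * om x (padd y z)"
    by (simp add: om_def field_simps)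
  finally show ?thesis .
qed

lemma om_pm1: assumes x: "x \<in> weyl_index n" and y: "y \<in> weyl_index n" and e: "(-1::complex) ^ sp x y = 1"
  shows "om x y = 1 \<or> om x y = -1"
proof -
  have "om x y = om y x" using om_swap2[OF x y] e by simp
  then have "om x y * om x y = 1" using om_swap1[OF x y] by simp
  then have "(om x y - 1) * (om x y + 1) = 0" by (simp add: algebra_simps)
  then have "om x y - 1 = 0 \<or> om x y + 1 = 0" by simp
  then show ?thesis by (auto simp: eq_neg_iff_add_eq_0)
qed

lemma weyl_comm: assumes x: "x \<in> weyl_index n" and y: "y \<in> weyl_index n" and u: "u \<in> bits n"
  shows "weyl x (weyl y \<phi>) u = (-1) ^ sp x y * weyl y (weyl x \<phi>) u"
  using om_swap2[OF x y] by (simp add: weyl_mult[OF x y u] weyl_mult[OF y x u] padd_comm)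

lemma weyl_invol: assumes x: "x \<in> weyl_index n" and u: "u \<in> bits n"
  shows "weyl x (weyl x \<phi>) u = \<phi> u"
  by (simp add: weyl_mult[OF x x u] om_self[OF x] padd_self[OF x] weyl_zn[OF u])


lemma inner_cnj: "cnj (Defs.inner n \<phi> \<chi>) = Defs.inner n \<chi> \<phi>"
  by (simp add: Defs.inner_def mult.commute)
lemma inner_cong_r: "(\<And>v. v \<in> bits n \<Longrightarrow> \<chi> v = \<chi>' v) \<Longrightarrow> Defs.inner n \<phi> \<chi> = Defs.inner n \<phi> \<chi>'"
  by (simp add: Defs.inner_def)
lemma inner_cong_l: "(\<And>v. v \<in> bits n \<Longrightarrow> \<phi> v = \<phi>' v) \<Longrightarrow> Defs.inner n \<phi> \<chi> = Defs.inner n \<phi>' \<chi>"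
  by (simp add: Defs.inner_def)
lemma inner_scale_r: "Defs.inner n \<phi> (\<lambda>v. c * \<chi> v) = c * Defs.inner n \<phi> \<chi>"
  by (simp add: Defs.inner_def sum_distrib_left ac_simps)
lemma inner_scale_l: "Defs.inner n (\<lambda>v. c * \<phi> v) \<chi> = cnj c * Defs.inner n \<phi> \<chi>"
  by (simp add: Defs.inner_def sum_distrib_left ac_simps)
lemma inner_add_r: "Defs.inner n \<phi> (\<lambda>v. \<chi> v + \<chi>' v) = Defs.inner n \<phi> \<chi> + Defs.inner n \<phi> \<chi>'"
  by (simp add: Defs.inner_def algebra_simps sum.distrib)
lemma inner_sum_r: "Defs.inner n \<phi> (\<lambda>v. \<Sum>i\<in>I. g i v) = (\<Sum>i\<in>I. Defs.inner n \<phi> (g i))"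
  by (simp add: Defs.inner_def sum_distrib_left sum.swap[of _ I])
lemma inner_sum_l: "Defs.inner n (\<lambda>v. \<Sum>i\<in>I. g i v) \<chi> = (\<Sum>i\<in>I. Defs.inner n (g i) \<chi>)"
  by (simp add: Defs.inner_def sum_distrib_right sum.swap[of _ I])
lemma inner_self: "Defs.inner n \<phi> \<phi> = of_real (\<Sum>v\<in>bits n. (cmod (\<phi> v))\<^sup>2)"
  unfolding Defs.inner_def of_real_sum complex_norm_square by (simp add: mult.commute)
lemma inner_self_ge0: "0 \<le> (\<Sum>v\<in>bits n. (cmod (\<phi> v))\<^sup>2)" by (simp add: sum_nonneg)

lemma cnj_i_pow: "cnj (\<i> ^ k) = \<i> ^ k * (-1) ^ k"
  by (simp add: power_mult_distrib[symmetric])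
lemma neg_i_pow: "(- \<i>) ^ k = \<i> ^ k * (-1) ^ k"
  by (simp add: power_mult_distrib[symmetric])

lemma weyl_selfadj: assumes x: "x \<in> weyl_index n"
  shows "Defs.inner n (weyl x \<phi>) \<chi> = Defs.inner n \<phi> (weyl x \<chi>)"
proof -
  obtain a b where xab: "x = (a,b)" by (cases x)
  have l: "length a = n" "length b = n" using x by (auto simp: xab V_iff)
  have a: "a \<in> bits n" using l by simp
  let ?g = "\<lambda>w. cnj (\<i> ^ bdot a b * (-1) ^ bdot b w * \<phi> w) * \<chi> (bxor w a)"
  have "Defs.inner n (weyl x \<phi>) \<chi> = (\<Sum>u\<in>bits n. ?g (bxor u a))"
    unfolding Defs.inner_def xab weyl_def by (intro sum.cong) (auto simp: bxor_cancel l)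
  also have "\<dots> = (\<Sum>u\<in>bits n. ?g u)" by (rule sum_bxor[OF a])
  also have "\<dots> = Defs.inner n \<phi> (weyl x \<chi>)"
    unfolding Defs.inner_def xab weyl_def
    by (intro sum.cong) (auto simp: l pm_bdot_bxor2 cnj_i_pow neg_i_pow bdot_comm ac_simps)
  finally show ?thesis .
qed

lemma weyl_unitary: assumes x: "x \<in> weyl_index n"
  shows "Defs.inner n (weyl x \<phi>) (weyl x \<chi>) = Defs.inner n \<phi> \<chi>"
  unfolding weyl_selfadj[OF x] by (rule inner_cong_r) (simp add: weyl_invol[OF x])

lemma expval_real: assumes x: "x \<in> weyl_index n"
  shows "cnj (Defs.inner n \<psi> (weyl x \<psi>)) = Defs.inner n \<psi> (weyl x \<psi>)"
  by (simp add: inner_cnj weyl_selfadj[OF x])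

lemma cauchy_schwarz: "(cmod (Defs.inner n \<phi> \<chi>))\<^sup>2 \<le> (\<Sum>v\<in>bits n. (cmod (\<phi> v))\<^sup>2) * (\<Sum>v\<in>bits n. (cmod (\<chi> v))\<^sup>2)"
proof -
  have "cmod (Defs.inner n \<phi> \<chi>) \<le> (\<Sum>v\<in>bits n. cmod (\<phi> v) * cmod (\<chi> v))"
    unfolding Defs.inner_def by (rule order_trans[OF norm_sum]) (simp add: norm_mult)
  then have "(cmod (Defs.inner n \<phi> \<chi>))\<^sup>2 \<le> (\<Sum>v\<in>bits n. cmod (\<phi> v) * cmod (\<chi> v))\<^sup>2"
    by (simp add: power_mono)
  also have "\<dots> \<le> (\<Sum>v\<in>bits n. (cmod (\<phi> v))\<^sup>2) * (\<Sum>v\<in>bits n. (cmod (\<chi> v))\<^sup>2)"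
    by (rule Cauchy_Schwarz_ineq_sum)
  finally show ?thesis .
qed


lemma sum_pm2: assumes "a \<in> bits n" "u \<in> bits n" "v \<in> bits n"
  shows "(\<Sum>b\<in>bits n. (-1::complex) ^ bdot b (bxor u a) * (-1) ^ bdot b (bxor v a)) = (if u = v then 2 ^ n else 0)"
proof -
  have "(\<Sum>b\<in>bits n. (-1::complex) ^ bdot b (bxor u a) * (-1) ^ bdot b (bxor v a))
      = (\<Sum>b\<in>bits n. (-1::complex) ^ bdot b (bxor u v))"
    using assms by (intro sum.cong) (auto simp: pm_bdot_bxor2 ac_simps pm_sq')
  also have "\<dots> = (if u = v then 2 ^ n else 0)"
    using assms bxor_eq_zero[of u v] by (subst sum_pm_bits) auto
  finally show ?thesis .
qed

lemma sum_V: "(\<Sum>x\<in>weyl_index n. g x) = (\<Sum>a\<in>bits n. \<Sum>b\<in>bits n. g (a,b))"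
  unfolding weyl_index_def by (simp add: sum.cartesian_product)

lemma completeness:
  "(\<Sum>x\<in>weyl_index n. Defs.inner n \<alpha> (weyl x \<beta>) * cnj (Defs.inner n \<gamma> (weyl x \<delta>)))
   = 2 ^ n * Defs.inner n \<alpha> \<gamma> * Defs.inner n \<delta> \<beta>"
proof -
  define G where "G = (\<lambda>a u v. cnj (\<alpha> u) * \<gamma> v * \<beta> (bxor u a) * cnj (\<delta> (bxor v a)))"
  have step1: "Defs.inner n \<alpha> (weyl (a,b) \<beta>) * cnj (Defs.inner n \<gamma> (weyl (a,b) \<delta>))
     = (\<Sum>u\<in>bits n. \<Sum>v\<in>bits n. G a u v * ((-1) ^ bdot b (bxor u a) * (-1) ^ bdot b (bxor v a)))" for a b
  proof -
    have c: "cnj (\<i> ^ bdot a b) * \<i> ^ bdot a b = 1" by (rule cnj_i)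
    have "Defs.inner n \<alpha> (weyl (a,b) \<beta>) * cnj (Defs.inner n \<gamma> (weyl (a,b) \<delta>))
      = (\<Sum>u\<in>bits n. \<Sum>v\<in>bits n. (cnj (\<i> ^ bdot a b) * \<i> ^ bdot a b) * (G a u v * ((-1) ^ bdot b (bxor u a) * (-1) ^ bdot b (bxor v a))))"
      unfolding Defs.inner_def weyl_def G_def sum_product cnj_sum
      apply (intro sum.cong refl)
      apply (simp only: fst_conv snd_conv complex_cnj_mult complex_cnj_cnj complex_cnj_power complex_cnj_minus complex_cnj_one)
      apply (simp only: mult_ac)
      done
    then show ?thesis unfolding c by simp
  qed
  have step2: "(\<Sum>b\<in>bits n. \<Sum>u\<in>bits n. \<Sum>v\<in>bits n. G a u v * ((-1) ^ bdot b (bxor u a) * (-1) ^ bdot b (bxor v a)))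
     = 2 ^ n * (\<Sum>u\<in>bits n. G a u u)" if a: "a \<in> bits n" for a
  proof -
    have "(\<Sum>b\<in>bits n. \<Sum>u\<in>bits n. \<Sum>v\<in>bits n. G a u v * ((-1) ^ bdot b (bxor u a) * (-1) ^ bdot b (bxor v a)))
       = (\<Sum>u\<in>bits n. \<Sum>b\<in>bits n. \<Sum>v\<in>bits n. G a u v * ((-1) ^ bdot b (bxor u a) * (-1) ^ bdot b (bxor v a)))"
      by (rule sum.swap)
    also have "\<dots> = (\<Sum>u\<in>bits n. \<Sum>v\<in>bits n. \<Sum>b\<in>bits n. G a u v * ((-1) ^ bdot b (bxor u a) * (-1) ^ bdot b (bxor v a)))"
      by (rule sum.cong[OF refl], rule sum.swap)
    also have "\<dots> = (\<Sum>u\<in>bits n. \<Sum>v\<in>bits n. G a u v * (\<Sum>b\<in>bits n. (-1) ^ bdot b (bxor u a) * (-1) ^ bdot b (bxor v a)))"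
      by (simp add: sum_distrib_left)
    also have "\<dots> = (\<Sum>u\<in>bits n. \<Sum>v\<in>bits n. G a u v * (if u = v then 2 ^ n else 0))"
      using a by (intro sum.cong refl) (simp add: sum_pm2)
    also have "\<dots> = 2 ^ n * (\<Sum>u\<in>bits n. G a u u)"
      by (simp add: sum_distrib_left if_distrib sum.delta mult.commute cong: if_cong)
    finally show ?thesis .
  qed
  have step3: "(\<Sum>a\<in>bits n. \<Sum>u\<in>bits n. G a u u) = Defs.inner n \<alpha> \<gamma> * Defs.inner n \<delta> \<beta>"
  proof -
    have "(\<Sum>a\<in>bits n. \<Sum>u\<in>bits n. G a u u) = (\<Sum>u\<in>bits n. cnj (\<alpha> u) * \<gamma> u * (\<Sum>a\<in>bits n. \<beta> (bxor a u) * cnj (\<delta> (bxor a u))))"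
      unfolding G_def by (subst sum.swap) (simp add: sum_distrib_left bxor_comm ac_simps)
    also have "\<dots> = (\<Sum>u\<in>bits n. cnj (\<alpha> u) * \<gamma> u * (\<Sum>a\<in>bits n. \<beta> a * cnj (\<delta> a)))"
      by (intro sum.cong refl) (simp add: sum_bxor[where g="\<lambda>w. \<beta> w * cnj (\<delta> w)"])
    also have "\<dots> = Defs.inner n \<alpha> \<gamma> * Defs.inner n \<delta> \<beta>"
    proof -
      have "(\<Sum>a\<in>bits n. \<beta> a * cnj (\<delta> a)) = Defs.inner n \<delta> \<beta>"
        by (simp add: Defs.inner_def mult.commute)
      then show ?thesis unfolding Defs.inner_def sum_distrib_right[symmetric] by simp
    qed
    finally show ?thesis .
  qed
  have "(\<Sum>x\<in>weyl_index n. Defs.inner n \<alpha> (weyl x \<beta>) * cnj (Defs.inner n \<gamma> (weyl x \<delta>)))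
     = (\<Sum>a\<in>bits n. \<Sum>b\<in>bits n. \<Sum>u\<in>bits n. \<Sum>v\<in>bits n. G a u v * ((-1) ^ bdot b (bxor u a) * (-1) ^ bdot b (bxor v a)))"
    unfolding sum_V step1 ..
  also have "\<dots> = (\<Sum>a\<in>bits n. 2 ^ n * (\<Sum>u\<in>bits n. G a u u))"
    by (intro sum.cong refl step2) simp
  also have "\<dots> = 2 ^ n * Defs.inner n \<alpha> \<gamma> * Defs.inner n \<delta> \<beta>"
    by (simp add: sum_distrib_left[symmetric] step3)
  finally show ?thesis .
qed


definition ev :: "nat \<Rightarrow> (bool list \<Rightarrow> complex) \<Rightarrow> bool list \<times> bool list \<Rightarrow> complex" where
  "ev n \<psi> x = Defs.inner n \<psi> (weyl x \<psi>)"
definition fv :: "nat \<Rightarrow> (bool list \<Rightarrow> complex) \<Rightarrow> bool list \<times> bool list \<Rightarrow> real" where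
  "fv n \<psi> x = (cmod (ev n \<psi> x))\<^sup>2"

lemma cnj_eq_real: "cnj z = z \<Longrightarrow> z = of_real (Re z)"
  by (auto simp: complex_eq_iff)

lemma ev_real: "x \<in> weyl_index n \<Longrightarrow> ev n \<psi> x = of_real (Re (ev n \<psi> x))"
  unfolding ev_def by (rule cnj_eq_real, rule expval_real)

lemma fv_Re: "x \<in> weyl_index n \<Longrightarrow> fv n \<psi> x = (Re (ev n \<psi> x))\<^sup>2"
  unfolding fv_def by (subst ev_real, assumption) (simp only: norm_of_real power2_abs)

lemma fv_nonneg: "0 \<le> fv n \<psi> x" by (simp add: fv_def)

lemma mult_cnj_norm: "z * cnj z = of_real ((cmod z)\<^sup>2)"
  by (rule complex_norm_square[symmetric])

lemma norm_one_of_inner: "Defs.inner n \<phi> \<phi> = 1 \<Longrightarrow> (\<Sum>v\<in>bits n. (cmod (\<phi> v))\<^sup>2) = 1"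
  by (metis inner_self of_real_eq_1_iff)

lemma sum_fv: assumes "pure_state n \<psi>"
  shows "(\<Sum>x\<in>weyl_index n. fv n \<psi> x) = 2 ^ n"
proof -
  have "(\<Sum>x\<in>weyl_index n. ev n \<psi> x * cnj (ev n \<psi> x)) = 2 ^ n"
    using completeness[of n \<psi> \<psi> \<psi> \<psi>] assms by (simp add: ev_def pure_state_def)
  then have "complex_of_real (\<Sum>x\<in>weyl_index n. fv n \<psi> x) = complex_of_real (2 ^ n)"
    unfolding mult_cnj_norm fv_def of_real_sum by simp
  then show ?thesis using of_real_eq_iff by blast
qed

lemma fv_le1: assumes "pure_state n \<psi>" and x: "x \<in> weyl_index n"
  shows "fv n \<psi> x \<le> 1"
proof -
  have "Defs.inner n (weyl x \<psi>) (weyl x \<psi>) = 1"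
    using assms by (simp add: weyl_unitary pure_state_def)
  then have "(\<Sum>v\<in>bits n. (cmod (weyl x \<psi> v))\<^sup>2) = 1" by (rule norm_one_of_inner)
  moreover have "(\<Sum>v\<in>bits n. (cmod (\<psi> v))\<^sup>2) = 1" using assms by (simp add: norm_one_of_inner pure_state_def)
  ultimately show ?thesis unfolding fv_def ev_def using cauchy_schwarz[of n \<psi> "weyl x \<psi>"] by simp
qed

lemma conj_ev: assumes x: "x \<in> weyl_index n" and y: "y \<in> weyl_index n"
  shows "Defs.inner n (weyl x \<psi>) (weyl y (weyl x \<psi>)) = (-1) ^ sp x y * ev n \<psi> y"
proof -
  have "Defs.inner n (weyl x \<psi>) (weyl y (weyl x \<psi>)) = Defs.inner n \<psi> (weyl x (weyl y (weyl x \<psi>)))"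
    by (rule weyl_selfadj[OF x])
  also have "\<dots> = Defs.inner n \<psi> (\<lambda>u. (-1) ^ sp x y * weyl y (weyl x (weyl x \<psi>)) u)"
    by (rule inner_cong_r) (rule weyl_comm[OF x y])
  also have "\<dots> = (-1) ^ sp x y * Defs.inner n \<psi> (weyl y (weyl x (weyl x \<psi>)))"
    by (rule inner_scale_r)
  also have "Defs.inner n \<psi> (weyl y (weyl x (weyl x \<psi>))) = ev n \<psi> y"
    unfolding ev_def by (rule inner_cong_r, rule weyl_cong[OF _ y]) (auto simp: weyl_invol[OF x])
  finally show ?thesis .
qed

lemma fourier: assumes "pure_state n \<psi>" and x: "x \<in> weyl_index n"
  shows "(\<Sum>y\<in>weyl_index n. (-1::real) ^ sp x y * fv n \<psi> y) = 2 ^ n * fv n \<psi> x"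
proof -
  have "(\<Sum>y\<in>weyl_index n. Defs.inner n (weyl x \<psi>) (weyl y (weyl x \<psi>)) * cnj (Defs.inner n \<psi> (weyl y \<psi>)))
     = 2 ^ n * Defs.inner n (weyl x \<psi>) \<psi> * Defs.inner n \<psi> (weyl x \<psi>)"
    by (rule completeness)
  moreover have "Defs.inner n (weyl x \<psi>) \<psi> = cnj (ev n \<psi> x)"
    by (simp add: ev_def inner_cnj)
  moreover have "Defs.inner n \<psi> (weyl x \<psi>) = ev n \<psi> x" by (simp add: ev_def)
  moreover have "(\<Sum>y\<in>weyl_index n. Defs.inner n (weyl x \<psi>) (weyl y (weyl x \<psi>)) * cnj (Defs.inner n \<psi> (weyl y \<psi>)))
     = (\<Sum>y\<in>weyl_index n. (-1) ^ sp x y * (ev n \<psi> y * cnj (ev n \<psi> y)))"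
  proof (rule sum.cong[OF refl])
    fix y assume y: "y \<in> weyl_index n"
    have "cnj (Defs.inner n \<psi> (weyl y \<psi>)) = cnj (ev n \<psi> y)" by (simp add: ev_def)
    then show "Defs.inner n (weyl x \<psi>) (weyl y (weyl x \<psi>)) * cnj (Defs.inner n \<psi> (weyl y \<psi>))
      = (-1) ^ sp x y * (ev n \<psi> y * cnj (ev n \<psi> y))"
      by (simp only: conj_ev[OF x y] mult.assoc)
  qed
  ultimately have "(\<Sum>y\<in>weyl_index n. (-1) ^ sp x y * (ev n \<psi> y * cnj (ev n \<psi> y))) = 2 ^ n * (ev n \<psi> x * cnj (ev n \<psi> x))"
    by (simp add: ac_simps)
  then have "complex_of_real (\<Sum>y\<in>weyl_index n. (-1::real) ^ sp x y * fv n \<psi> y) = complex_of_real (2 ^ n * fv n \<psi> x)"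
    unfolding mult_cnj_norm fv_def of_real_sum by simp
  then show ?thesis using of_real_eq_iff by blast
qed


lemma char_fv: "char_dist n \<psi> x = fv n \<psi> x / 2 ^ n"
  by (simp add: char_dist_def fv_def ev_def)

lemma fv_padd: assumes "pure_state n \<psi>" and x: "x \<in> weyl_index n" and y: "y \<in> weyl_index n"
  shows "fv n \<psi> (padd x y) = (\<Sum>z\<in>weyl_index n. (-1::real) ^ sp x z * (-1) ^ sp y z * fv n \<psi> z) / 2 ^ n"
proof -
  have "(\<Sum>z\<in>weyl_index n. (-1::real) ^ sp (padd x y) z * fv n \<psi> z) = 2 ^ n * fv n \<psi> (padd x y)"
    using fourier[OF assms(1) padd_V[OF x y]] .
  moreover have "(\<Sum>z\<in>weyl_index n. (-1::real) ^ sp (padd x y) z * fv n \<psi> z)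
     = (\<Sum>z\<in>weyl_index n. (-1::real) ^ sp x z * (-1) ^ sp y z * fv n \<psi> z)"
    by (intro sum.cong refl) (simp add: pm_sp_padd[OF x y])
  ultimately show ?thesis by simp
qed

lemma triple: assumes "pure_state n \<psi>"
  shows "(\<Sum>x\<in>weyl_index n. \<Sum>y\<in>weyl_index n. fv n \<psi> x * fv n \<psi> y * fv n \<psi> (padd x y))
       = 2 ^ n * (\<Sum>z\<in>weyl_index n. fv n \<psi> z ^ 3)"
proof -
  let ?V = "weyl_index n" and ?f = "fv n \<psi>"
  let ?g = "\<lambda>x y z. ?f x * ?f y * ?f z * ((-1::real) ^ sp x z * (-1) ^ sp y z) / 2 ^ n"
  have "(\<Sum>x\<in>?V. \<Sum>y\<in>?V. ?f x * ?f y * ?f (padd x y)) = (\<Sum>x\<in>?V. \<Sum>y\<in>?V. \<Sum>z\<in>?V. ?g x y z)"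
    by (intro sum.cong refl) (simp add: fv_padd[OF assms] sum_distrib_left sum_divide_distrib ac_simps)
  also have "\<dots> = (\<Sum>x\<in>?V. \<Sum>z\<in>?V. \<Sum>y\<in>?V. ?g x y z)"
    by (rule sum.cong[OF refl], rule sum.swap)
  also have "\<dots> = (\<Sum>z\<in>?V. \<Sum>x\<in>?V. \<Sum>y\<in>?V. ?g x y z)"
    by (rule sum.swap)
  also have "\<dots> = (\<Sum>z\<in>?V. ?f z * (\<Sum>x\<in>?V. (-1) ^ sp z x * ?f x) * (\<Sum>y\<in>?V. (-1) ^ sp z y * ?f y) / 2 ^ n)"
    by (intro sum.cong refl) (simp add: sum_product sum_divide_distrib sum_distrib_left sp_comm ac_simps)
  also have "\<dots> = (\<Sum>z\<in>?V. ?f z * (2 ^ n * ?f z) * (2 ^ n * ?f z) / 2 ^ n)"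
    by (intro sum.cong refl) (simp add: fourier[OF assms])
  also have "\<dots> = 2 ^ n * (\<Sum>z\<in>?V. ?f z ^ 3)"
    by (simp add: sum_distrib_left power3_eq_cube ac_simps)
  finally show ?thesis .
qed

lemma eta_formula: assumes "pure_state n \<psi>"
  shows "eta n \<psi> = (\<Sum>x\<in>weyl_index n. fv n \<psi> x ^ 3) / 2 ^ n"
proof -
  let ?V = "weyl_index n" and ?f = "fv n \<psi>"
  have "eta n \<psi> = (\<Sum>x\<in>?V. \<Sum>y\<in>?V. ?f x * ?f y * ?f (padd x y)) / (2 ^ n * 2 ^ n)"
    unfolding eta_def conv_dist_def char_fv
    by (simp add: sum_divide_distrib sum_distrib_left sum_distrib_right ac_simps)
  also have "\<dots> = (\<Sum>x\<in>?V. ?f x ^ 3) / 2 ^ n"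
    unfolding triple[OF assms] by simp
  finally show ?thesis .
qed

lemma cube_bound: "0 \<le> (t::real) \<Longrightarrow> t \<le> 1 \<Longrightarrow> t ^ 3 \<le> (if t > 1/2 then t else t / 4)"
proof -
  assume t: "0 \<le> t" "t \<le> 1"
  have "t * t \<le> 1" using t by (simp add: mult_le_one)
  then have "t * (t * t) \<le> t" using t by (intro mult_left_le)
  then have a: "t ^ 3 \<le> t" by (simp add: power3_eq_cube ac_simps)
  have "t \<le> 1/2 \<Longrightarrow> t * t \<le> 1/4" using t mult_mono[of t "1/2" t "1/2"] by simp
  then have b: "t \<le> 1/2 \<Longrightarrow> t ^ 3 \<le> t / 4" using t mult_left_mono[of "t*t" "1/4" t]
    by (simp add: power3_eq_cube ac_simps)
  show ?thesis using a b by auto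
qed

lemma lin_aux: "e \<le> 1/4 + 3/4 * S \<Longrightarrow> (4*e-1)/3 \<le> (S::real)" by (simp add: field_simps)

lemma eta_bound: assumes "pure_state n \<psi>"
  shows "(4 * eta n \<psi> - 1) / 3 \<le> (\<Sum>x\<in>{x\<in>weyl_index n. fv n \<psi> x > 1/2}. fv n \<psi> x) / 2 ^ n"
proof -
  let ?V = "weyl_index n" and ?f = "fv n \<psi>"
  let ?A = "{x\<in>?V. ?f x > 1/2}"
  have "(\<Sum>x\<in>?V. ?f x ^ 3) \<le> (\<Sum>x\<in>?V. if ?f x > 1/2 then ?f x else ?f x / 4)"
    by (rule sum_mono) (rule cube_bound[OF fv_nonneg fv_le1[OF assms]])
  also have "\<dots> = (\<Sum>x\<in>?V. ?f x / 4 + (if ?f x > 1/2 then 3/4 * ?f x else 0))"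
    by (intro sum.cong refl) auto
  also have "\<dots> = (\<Sum>x\<in>?V. ?f x) / 4 + 3/4 * (\<Sum>x\<in>?A. ?f x)"
    by (simp add: sum.distrib sum_divide_distrib sum.inter_filter[symmetric] sum_distrib_left)
  finally have "(\<Sum>x\<in>?V. ?f x ^ 3) \<le> 2 ^ n / 4 + 3/4 * (\<Sum>x\<in>?A. ?f x)"
    by (simp add: sum_fv[OF assms])
  then have "eta n \<psi> \<le> 1/4 + 3/4 * ((\<Sum>x\<in>?A. ?f x) / 2 ^ n)"
    unfolding eta_formula[OF assms] by (simp add: field_simps)
  then show ?thesis by (rule lin_aux)
qed


lemma inner_add_l: "Defs.inner n (\<lambda>v. \<phi> v + \<phi>' v) \<chi> = Defs.inner n \<phi> \<chi> + Defs.inner n \<phi>' \<chi>"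
  by (simp add: Defs.inner_def algebra_simps sum.distrib)

lemma sq_le_self: "0 \<le> r \<Longrightarrow> r\<^sup>2 \<le> r \<Longrightarrow> r \<le> (1::real)"
proof (rule ccontr)
  assume "0 \<le> r" "r\<^sup>2 \<le> r" "\<not> r \<le> 1"
  then have "r * 1 < r * r" by (intro mult_strict_left_mono) auto
  then show False using \<open>r\<^sup>2 \<le> r\<close> by (simp add: power2_eq_square)
qed

lemma anticomm_bound: assumes pure: "pure_state n \<psi>" and x: "x \<in> weyl_index n" and y: "y \<in> weyl_index n"
  and odd: "(-1::complex) ^ sp x y = -1"
  shows "fv n \<psi> x + fv n \<psi> y \<le> 1"
proof -
  define a where "a = Re (ev n \<psi> x)"
  define b where "b = Re (ev n \<psi> y)"
  have ea: "ev n \<psi> x = of_real a" unfolding a_def by (rule ev_real[OF x])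
  have eb: "ev n \<psi> y = of_real b" unfolding b_def by (rule ev_real[OF y])
  define \<chi> where "\<chi> = (\<lambda>v. of_real a * weyl x \<psi> v + of_real b * weyl y \<psi> v)"
  have p1: "Defs.inner n \<psi> \<psi> = 1" using pure by (simp add: pure_state_def)
  have i1: "Defs.inner n \<psi> \<chi> = of_real (a\<^sup>2 + b\<^sup>2)"
    unfolding \<chi>_def inner_add_r inner_scale_r ev_def[symmetric] ea eb by (simp add: power2_eq_square)
  define K where "K = Defs.inner n \<psi> (weyl x (weyl y \<psi>))"
  have k1: "Defs.inner n (weyl x \<psi>) (weyl y \<psi>) = K" unfolding K_def by (rule weyl_selfadj[OF x])
  have k2: "Defs.inner n (weyl y \<psi>) (weyl x \<psi>) = - K"
  proof -
    have "Defs.inner n (weyl y \<psi>) (weyl x \<psi>) = Defs.inner n \<psi> (weyl y (weyl x \<psi>))" by (rule weyl_selfadj[OF y])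
    also have "\<dots> = Defs.inner n \<psi> (\<lambda>u. (-1) ^ sp y x * weyl x (weyl y \<psi>) u)"
      by (rule inner_cong_r) (rule weyl_comm[OF y x])
    also have "\<dots> = - K" unfolding inner_scale_r K_def using odd by (simp add: sp_comm)
    finally show ?thesis .
  qed
  have u1: "Defs.inner n (weyl x \<psi>) (weyl x \<psi>) = 1" using p1 by (simp add: weyl_unitary[OF x])
  have u2: "Defs.inner n (weyl y \<psi>) (weyl y \<psi>) = 1" using p1 by (simp add: weyl_unitary[OF y])
  have i2: "Defs.inner n \<chi> \<chi> = of_real (a\<^sup>2 + b\<^sup>2)"
    unfolding \<chi>_def inner_add_r inner_add_l inner_scale_r inner_scale_l k1 k2 u1 u2
    by (simp add: power2_eq_square algebra_simps)
  have n\<chi>: "(\<Sum>v\<in>bits n. (cmod (\<chi> v))\<^sup>2) = a\<^sup>2 + b\<^sup>2"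
    using i2 unfolding inner_self by (simp only: of_real_eq_iff)
  have n\<psi>: "(\<Sum>v\<in>bits n. (cmod (\<psi> v))\<^sup>2) = 1" using p1 by (rule norm_one_of_inner)
  have "(cmod (Defs.inner n \<psi> \<chi>))\<^sup>2 \<le> a\<^sup>2 + b\<^sup>2"
    using cauchy_schwarz[of n \<psi> \<chi>] n\<chi> n\<psi> by simp
  then have "(a\<^sup>2 + b\<^sup>2)\<^sup>2 \<le> a\<^sup>2 + b\<^sup>2" by (simp only: i1 norm_of_real power2_abs)
  then have "a\<^sup>2 + b\<^sup>2 \<le> 1"
    by (rule sq_le_self[rotated]) simp
  moreover have "fv n \<psi> x = a\<^sup>2" "fv n \<psi> y = b\<^sup>2" using fv_Re[OF x] fv_Re[OF y] a_def b_def by auto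
  ultimately show ?thesis by simp
qed

lemma pm_cases: "(-1::complex) ^ k = 1 \<or> (-1::complex) ^ k = -1"
  by (induction k) auto

lemma big_commute: assumes pure: "pure_state n \<psi>" and x: "x \<in> weyl_index n" and y: "y \<in> weyl_index n"
  and fx: "fv n \<psi> x > 1/2" and fy: "fv n \<psi> y > 1/2"
  shows "(-1::complex) ^ sp x y = 1"
  using pm_cases[of "sp x y"] anticomm_bound[OF pure x y] fx fy by fastforce


definition iso :: "nat \<Rightarrow> (bool list \<times> bool list) set \<Rightarrow> (bool list \<times> bool list \<Rightarrow> complex) \<Rightarrow> bool" where
  "iso n T s \<longleftrightarrow> T \<subseteq> weyl_index n \<and> zn n \<in> T \<and>
     (\<forall>x\<in>T. \<forall>y\<in>T. padd x y \<in> T \<and> (-1::complex) ^ sp x y = 1 \<and> s x * s y * om x y = s (padd x y)) \<and>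
     (\<forall>x\<in>T. s x = 1 \<or> s x = -1)"

definition perp :: "nat \<Rightarrow> (bool list \<times> bool list) set \<Rightarrow> (bool list \<times> bool list) set" where
  "perp n T = {z \<in> weyl_index n. \<forall>t\<in>T. (-1::complex) ^ sp z t = 1}"

lemma card_bits: "card (bits n) = 2 ^ n"
  unfolding bits_def using card_lists_length_eq[of "UNIV::bool set" n] by simp
lemma card_V: "card (weyl_index n) = 4 ^ n"
  by (simp add: weyl_index_def card_cartesian_product card_bits power_mult_distrib[symmetric])

lemma char_sum_V: assumes w: "w \<in> weyl_index n"
  shows "(\<Sum>z\<in>weyl_index n. (-1::complex) ^ sp z w) = (if w = zn n then 4 ^ n else 0)"
proof -
  obtain a b where wab: "w = (a,b)" by (cases w)
  have l: "length a = n" "length b = n" using w by (auto simp: wab V_iff)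
  have "(\<Sum>z\<in>weyl_index n. (-1::complex) ^ sp z w)
      = (\<Sum>a'\<in>bits n. \<Sum>b'\<in>bits n. (-1::complex) ^ bdot a' b * (-1) ^ bdot b' a)"
    unfolding sum_V wab sp_def by (simp add: power_add bdot_comm ac_simps)
  also have "\<dots> = (\<Sum>a'\<in>bits n. (-1::complex) ^ bdot a' b) * (\<Sum>b'\<in>bits n. (-1::complex) ^ bdot b' a)"
    by (simp add: sum_product)
  also have "\<dots> = (if w = zn n then 4 ^ n else 0)"
    using l by (simp add: sum_pm_bits wab zn_def power_mult_distrib[symmetric])
  finally show ?thesis .
qed

lemma iso_V: "iso n T s \<Longrightarrow> x \<in> T \<Longrightarrow> x \<in> weyl_index n" by (auto simp: iso_def)
lemma iso_finite: "iso n T s \<Longrightarrow> finite T" by (auto simp: iso_def intro: finite_subset)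

lemma bij_padd: assumes "iso n T s" "t0 \<in> T" shows "bij_betw (padd t0) T T"
proof -
  have c: "\<And>x. x \<in> T \<Longrightarrow> padd t0 (padd t0 x) = x" using assms by (meson iso_V padd_cancel)
  have "\<And>x. x \<in> T \<Longrightarrow> padd t0 x \<in> T" using assms by (auto simp: iso_def)
  then show ?thesis by (intro bij_betw_byWitness[where f'="padd t0"]) (auto simp: c)
qed

lemma sum_padd: assumes "iso n T s" "t0 \<in> T" shows "(\<Sum>t\<in>T. g (padd t0 t)) = (\<Sum>t\<in>T. g t)"
  using sum.reindex_bij_betw[OF bij_padd[OF assms], of g] by simp

lemma inner_char: assumes T: "iso n T s" and z: "z \<in> weyl_index n"
  shows "(\<Sum>t\<in>T. (-1::complex) ^ sp z t) = (if z \<in> perp n T then of_nat (card T) else 0)"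
proof (cases "z \<in> perp n T")
  case True then show ?thesis by (simp add: perp_def)
next
  case False
  then obtain t0 where t0: "t0 \<in> T" "(-1::complex) ^ sp z t0 \<noteq> 1" using z by (auto simp: perp_def)
  then have m: "(-1::complex) ^ sp z t0 = -1" using pm_cases by blast
  have "(\<Sum>t\<in>T. (-1::complex) ^ sp z t) = (\<Sum>t\<in>T. (-1::complex) ^ sp z (padd t0 t))"
    by (rule sum_padd[OF T t0(1), symmetric])
  also have "\<dots> = - (\<Sum>t\<in>T. (-1::complex) ^ sp z t)"
    using T t0 m by (simp add: pm_sp_padd2[OF _ _ z] iso_V sum_negf)
  finally show ?thesis using False by simp
qed

lemma count_perp: assumes T: "iso n T s"
  shows "card T * card (perp n T) = 4 ^ n"
proof -
  have "(\<Sum>z\<in>weyl_index n. \<Sum>t\<in>T. (-1::complex) ^ sp z t) = (\<Sum>z\<in>weyl_index n. if z \<in> perp n T then of_nat (card T) else 0)"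
    by (intro sum.cong refl) (simp add: inner_char[OF T])
  also have "\<dots> = of_nat (card T) * of_nat (card (perp n T))"
    by (simp add: sum.If_cases perp_def Int_absorb1 Collect_conj_eq[symmetric])
       (simp add: Int_def conj_commute)
  finally have 1: "(\<Sum>z\<in>weyl_index n. \<Sum>t\<in>T. (-1::complex) ^ sp z t) = of_nat (card T * card (perp n T))" by simp
  have "(\<Sum>z\<in>weyl_index n. \<Sum>t\<in>T. (-1::complex) ^ sp z t) = (\<Sum>t\<in>T. \<Sum>z\<in>weyl_index n. (-1::complex) ^ sp z t)"
    by (rule sum.swap)
  also have "\<dots> = (\<Sum>t\<in>T. if t = zn n then 4 ^ n else 0)"
    using T by (intro sum.cong refl) (simp add: char_sum_V iso_V)
  also have "\<dots> = 4 ^ n" using T iso_finite[OF T] by (simp add: iso_def)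
  finally have "of_nat (card T * card (perp n T)) = (of_nat (4 ^ n) :: complex)" using 1 by simp
  then show ?thesis using of_nat_eq_iff by blast
qed


lemma om_c: assumes z: "z \<in> weyl_index n" and t: "t \<in> weyl_index n" and u: "u \<in> weyl_index n"
  and e: "(-1::complex) ^ sp z t = 1"
  shows "om z u * om t (padd z u) = om z (padd t u) * om t u"
proof -
  have "om t z = om z t" using om_swap2[OF t z] e by (simp add: sp_comm)
  then have "om z u * om t (padd z u) = om z t * om (padd z t) u"
    using om_cocycle[OF t z u] by (simp add: padd_comm)
  also have "\<dots> = om z (padd t u) * om t u"
    using om_cocycle[OF z t u] by (simp add: mult.commute)
  finally show ?thesis .
qed

lemma om_d: assumes z: "z \<in> weyl_index n" and w: "w \<in> weyl_index n"
  shows "om z w * om z (padd z w) = 1"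
  using om_cocycle[OF z z w] by (simp add: om_self[OF z] padd_self[OF z] om_zn1[OF w])

lemma om_dd: assumes z: "z \<in> weyl_index n" and t: "t \<in> weyl_index n" and u: "u \<in> weyl_index n"
  and e: "(-1::complex) ^ sp z t = 1"
  shows "om z t * om z u * om (padd z t) (padd z u) = om t u"
proof -
  have zu: "padd z u \<in> weyl_index n" and tu: "padd t u \<in> weyl_index n" using z t u by auto
  have p: "padd t (padd z u) = padd z (padd t u)" by (metis padd_assoc padd_comm)
  have "om z t * om z u * om (padd z t) (padd z u) = om z u * (om z t * om (padd z t) (padd z u))"
    by (simp add: ac_simps)
  also have "\<dots> = om z u * (om t (padd z u) * om z (padd z (padd t u)))"
    using om_cocycle[OF z t zu] p by simp
  also have "\<dots> = (om z u * om t (padd z u)) * om z (padd z (padd t u))" by (simp add: ac_simps)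
  also have "\<dots> = om t u * (om z (padd t u) * om z (padd z (padd t u)))"
    unfolding om_c[OF z t u e] by (simp add: ac_simps)
  also have "\<dots> = om t u" using om_d[OF z tu] by simp
  finally show ?thesis .
qed

lemma iso_extend:
  assumes T: "iso n T s" and z: "z \<in> weyl_index n" and zT: "z \<notin> T"
    and zp: "\<forall>t\<in>T. (-1::complex) ^ sp z t = 1"
  defines "T' \<equiv> T \<union> padd z ` T"
    and "s' \<equiv> (\<lambda>u. if u \<in> T then s u else om z (padd z u) * s (padd z u))"
  shows "iso n T' s' \<and> card T' = 2 * card T"
proof -
  have TV: "\<And>t. t \<in> T \<Longrightarrow> t \<in> weyl_index n" using T by (rule iso_V)
  have cl: "\<And>x y. x \<in> T \<Longrightarrow> y \<in> T \<Longrightarrow> padd x y \<in> T" using T by (auto simp: iso_def)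
  have cm: "\<And>x y. x \<in> T \<Longrightarrow> y \<in> T \<Longrightarrow> (-1::complex) ^ sp x y = 1" using T by (auto simp: iso_def)
  have cs: "\<And>x y. x \<in> T \<Longrightarrow> y \<in> T \<Longrightarrow> s x * s y * om x y = s (padd x y)" using T by (auto simp: iso_def)
  have sg: "\<And>x. x \<in> T \<Longrightarrow> s x = 1 \<or> s x = -1" using T by (auto simp: iso_def)
  have zn: "zn n \<in> T" using T by (auto simp: iso_def)
  have nin: "\<And>t. t \<in> T \<Longrightarrow> padd z t \<notin> T"
  proof
    fix t assume t: "t \<in> T" and pt: "padd z t \<in> T"
    have "padd (padd z t) t \<in> T" by (rule cl[OF pt t])
    then show False using zT padd_cancel2[OF TV[OF t] z] by simp
  qed
  have s1: "\<And>t. t \<in> T \<Longrightarrow> s' t = s t" by (simp add: s'_def)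
  have s2: "\<And>t. t \<in> T \<Longrightarrow> s' (padd z t) = om z t * s t"
    using nin by (simp add: s'_def padd_cancel[OF z TV])
  have zz: "(-1::complex) ^ sp z z = 1" by (rule pm_sp_self)
  have zc: "\<And>t. t \<in> T \<Longrightarrow> (-1::complex) ^ sp t z = 1" using zp by (simp add: sp_comm)
  have Q: "padd x y \<in> T' \<and> (-1::complex) ^ sp x y = 1 \<and> s' x * s' y * om x y = s' (padd x y)"
    if x: "x \<in> T'" and y: "y \<in> T'" for x y
  proof -
    consider (a) "x \<in> T" "y \<in> T" | (b) t u where "x = padd z t" "y = u" "t \<in> T" "u \<in> T"
      | (c) t u where "x = t" "y = padd z u" "t \<in> T" "u \<in> T"
      | (d) t u where "x = padd z t" "y = padd z u" "t \<in> T" "u \<in> T"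
      using x y unfolding T'_def by blast
    then show ?thesis
    proof cases
      case a then show ?thesis by (simp add: T'_def cl cm s1 cs)
    next
      case (b t u)
      have V: "t \<in> weyl_index n" "u \<in> weyl_index n" using b TV by auto
      have p: "padd (padd z t) u = padd z (padd t u)" by (simp add: padd_assoc)
      have "s' x * s' y * om x y = om z t * om (padd z t) u * s t * s u"
        using b by (simp add: s1 s2 ac_simps)
      also have "\<dots> = om z (padd t u) * (s t * s u * om t u)"
        using om_cocycle[OF z V] by (simp add: ac_simps)
      also have "\<dots> = s' (padd x y)" using b by (simp add: p s2 cl cs)
      finally show ?thesis using b V z
        by (simp add: T'_def p cl pm_sp_padd zp cm)
    next
      case (c t u)
      have V: "t \<in> weyl_index n" "u \<in> weyl_index n" using c TV by auto
      have p: "padd t (padd z u) = padd z (padd t u)" by (metis padd_assoc padd_comm)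
      have e: "(-1::complex) ^ sp z t = 1" using zp c by simp
      have "s' x * s' y * om x y = (om z u * om t (padd z u)) * s t * s u"
        using c by (simp add: s1 s2 ac_simps)
      also have "\<dots> = om z (padd t u) * (s t * s u * om t u)"
        unfolding om_c[OF z V(1) V(2) e] by (simp add: ac_simps)
      also have "\<dots> = s' (padd x y)" using c by (simp add: p s2 cl cs)
      finally show ?thesis using c V z
        by (simp add: T'_def p cl pm_sp_padd2 zc cm)
    next
      case (d t u)
      have V: "t \<in> weyl_index n" "u \<in> weyl_index n" using d TV by auto
      have p: "padd (padd z t) (padd z u) = padd t u"
        by (metis padd_assoc padd_comm padd_cancel z V(2))
      have e: "(-1::complex) ^ sp z t = 1" using zp d by simp
      have "s' x * s' y * om x y = (om z t * om z u * om (padd z t) (padd z u)) * s t * s u"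
        using d by (simp add: s1 s2 ac_simps)
      also have "\<dots> = s t * s u * om t u"
        unfolding om_dd[OF z V(1) V(2) e] by (simp add: ac_simps)
      also have "\<dots> = s' (padd x y)" using d by (simp add: p s1 cl cs)
      finally show ?thesis using d V z
        by (simp add: T'_def p cl pm_sp_padd pm_sp_padd2 zc zp zz cm)
    qed
  qed
  have sg': "s' x = 1 \<or> s' x = -1" if x: "x \<in> T'" for x
  proof (cases "x \<in> T")
    case True then show ?thesis using sg s1 by simp
  next
    case False
    then obtain t where t: "t \<in> T" "x = padd z t" using x unfolding T'_def by blast
    have "om z t = 1 \<or> om z t = -1" using om_pm1[OF z TV[OF t(1)]] zp t by simp
    then show ?thesis using sg[OF t(1)] s2[OF t(1)] t by auto
  qed
  have iso': "iso n T' s'"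
    unfolding iso_def using Q sg' zn z TV by (auto simp: T'_def)
  have fin: "finite T" by (rule iso_finite[OF T])
  have "card T' = card T + card (padd z ` T)"
    unfolding T'_def using fin nin by (intro card_Un_disjoint) auto
  moreover have "card (padd z ` T) = card T"
    by (rule card_image) (metis inj_onI padd_cancel z TV)
  ultimately show ?thesis using iso' by simp
qed


lemma iso_zn: "iso n {zn n} (\<lambda>_. 1)"
  by (simp add: iso_def padd_self om_self[OF zn_V])

lemma iso_card_le: "iso n T s \<Longrightarrow> card T \<le> 4 ^ n"
  unfolding iso_def card_V[symmetric] by (intro card_mono) auto

lemma iso_card_pos: "iso n T s \<Longrightarrow> 0 < card T"
  using iso_finite[of n T s] by (auto simp: iso_def card_gt_0_iff)

lemma sq_eq_nat: "(k::nat) * k = m * m \<Longrightarrow> k = m"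
proof (rule ccontr)
  assume e: "k * k = m * m" and ne: "k \<noteq> m"
  have "k < m \<Longrightarrow> k * k < m * m" by (intro mult_strict_mono) auto
  moreover have "m < k \<Longrightarrow> m * m < k * k" by (intro mult_strict_mono) auto
  ultimately show False using e ne by linarith
qed

lemma lagrangian_exists:
  assumes AV: "A \<subseteq> weyl_index n" and Ac: "\<forall>a\<in>A. \<forall>b\<in>A. (-1::complex) ^ sp a b = 1"
  shows "\<exists>S s. iso n S s \<and> A \<subseteq> S \<and> card S = 2 ^ n"
proof -
  have main: "\<And>T s. iso n T s \<Longrightarrow> (\<forall>a\<in>A. \<forall>t\<in>T. (-1::complex) ^ sp a t = 1) \<Longrightarrow> 4 ^ n - card T = m
     \<Longrightarrow> \<exists>S s. iso n S s \<and> A \<subseteq> S \<and> card S = 2 ^ n" for m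
  proof (induction m rule: less_induct)
    case (less m T s)
    note T = less.prems(1) and AT = less.prems(2)
    have le: "card T \<le> 4 ^ n" by (rule iso_card_le[OF T])
    have pos: "0 < card T" by (rule iso_card_pos[OF T])
    show ?case
    proof (cases "A \<subseteq> T")
      case False
      then obtain a where a: "a \<in> A" "a \<notin> T" by blast
      have aV: "a \<in> weyl_index n" using a AV by auto
      define T' where "T' = T \<union> padd a ` T"
      define s' where "s' = (\<lambda>u. if u \<in> T then s u else om a (padd a u) * s (padd a u))"
      have ext: "iso n T' s' \<and> card T' = 2 * card T"
        unfolding T'_def s'_def by (rule iso_extend[OF T aV a(2)]) (use AT a in auto)
      have AT': "\<forall>a'\<in>A. \<forall>t\<in>T'. (-1::complex) ^ sp a' t = 1"
      proof (intro ballI)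
        fix a' t assume a': "a' \<in> A" and t: "t \<in> T'"
        have a'V: "a' \<in> weyl_index n" using a' AV by auto
        show "(-1::complex) ^ sp a' t = 1"
        proof (cases "t \<in> T")
          case True then show ?thesis using AT a' by auto
        next
          case False
          then obtain u where u: "u \<in> T" "t = padd a u" using t T'_def by auto
          have "(-1::complex) ^ sp a' a = 1" using Ac a' a by blast
          moreover have "(-1::complex) ^ sp a' u = 1" using AT a' u by blast
          ultimately show ?thesis using pm_sp_padd2[where 'a=complex, OF aV iso_V[OF T u(1)] a'V] u by simp
        qed
      qed
      have isoT': "iso n T' s'" using ext by blast
      have "card T' \<le> 4 ^ n" by (rule iso_card_le[OF isoT'])
      then have lt: "4 ^ n - card T' < m" using ext pos less.prems(3) by linarith
      show ?thesis by (rule less.IH[OF lt isoT' AT' refl])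
    next
      case True
      note AsubT = True
      show ?thesis
      proof (cases "\<exists>z. z \<in> perp n T \<and> z \<notin> T")
        case True
        then obtain z where z: "z \<in> perp n T" "z \<notin> T" by blast
        have zV: "z \<in> weyl_index n" using z by (simp add: perp_def)
        define T' where "T' = T \<union> padd z ` T"
        define s' where "s' = (\<lambda>u. if u \<in> T then s u else om z (padd z u) * s (padd z u))"
        have ext: "iso n T' s' \<and> card T' = 2 * card T"
          unfolding T'_def s'_def by (rule iso_extend[OF T zV z(2)]) (use z in \<open>auto simp: perp_def\<close>)
        have isoT': "iso n T' s'" using ext by blast
        have AT': "\<forall>a'\<in>A. \<forall>t\<in>T'. (-1::complex) ^ sp a' t = 1"
        proof (intro ballI)
          fix a' t assume a': "a' \<in> A" and t: "t \<in> T'"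
          have "a' \<in> T'" using a' AsubT unfolding T'_def by blast
          then show "(-1::complex) ^ sp a' t = 1" using isoT' t unfolding iso_def by blast
        qed
        have "card T' \<le> 4 ^ n" by (rule iso_card_le[OF isoT'])
        then have lt: "4 ^ n - card T' < m" using ext pos less.prems(3) by linarith
        show ?thesis by (rule less.IH[OF lt isoT' AT' refl])
      next
        case False
        have "perp n T = T"
        proof
          show "perp n T \<subseteq> T" using False by blast
          show "T \<subseteq> perp n T" using T by (auto simp: perp_def iso_def)
        qed
        then have "card T * card T = 2 ^ n * 2 ^ n"
          using count_perp[OF T] by (simp add: power_mult_distrib[symmetric])
        then have "card T = 2 ^ n" by (rule sq_eq_nat)
        then show ?thesis using T AsubT by blast
      qed
    qed
  qed
  show ?thesis by (rule main[OF iso_zn _ refl]) (simp add: V_iff zn_def sp_def)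
qed


definition proj :: "nat \<Rightarrow> (bool list \<times> bool list) set \<Rightarrow> (bool list \<times> bool list \<Rightarrow> complex)
   \<Rightarrow> (bool list \<Rightarrow> complex) \<Rightarrow> (bool list \<Rightarrow> complex)" where
  "proj n S s \<phi> = (\<lambda>v. \<Sum>x\<in>S. (s x / 2 ^ n) * weyl x \<phi> v)"

lemma iso_twist: assumes S: "iso n S s" and z: "z \<in> weyl_index n"
  shows "iso n S (\<lambda>x. s x * (-1) ^ sp z x)"
proof -
  have "s x * (-1) ^ sp z x * (s y * (-1) ^ sp z y) * om x y = s (padd x y) * (-1) ^ sp z (padd x y)"
    if x: "x \<in> S" and y: "y \<in> S" for x y
  proof -
    have "s x * s y * om x y = s (padd x y)" using S x y by (auto simp: iso_def)
    moreover have "(-1::complex) ^ sp z (padd x y) = (-1) ^ sp z x * (-1) ^ sp z y"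
      using pm_sp_padd2[OF iso_V[OF S x] iso_V[OF S y] z] .
    ultimately show ?thesis by (simp add: ac_simps)
  qed
  moreover have "s x * (-1) ^ sp z x = 1 \<or> s x * (-1) ^ sp z x = -1" if x: "x \<in> S" for x
    using S x pm_cases[of "sp z x"] by (auto simp: iso_def)
  ultimately show ?thesis using S by (auto simp: iso_def)
qed

lemma iso_sign_real: "iso n S s \<Longrightarrow> x \<in> S \<Longrightarrow> cnj (s x) = s x"
  by (auto simp: iso_def)

lemma proj_stab: assumes S: "iso n S s" and y: "y \<in> S" and u: "u \<in> bits n"
  shows "s y * weyl y (proj n S s \<phi>) u = proj n S s \<phi> u"
proof -
  have yV: "y \<in> weyl_index n" by (rule iso_V[OF S y])
  have "s y * weyl y (proj n S s \<phi>) u = (\<Sum>x\<in>S. s y * (s x / 2 ^ n) * weyl y (weyl x \<phi>) u)"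
    unfolding proj_def weyl_sum weyl_scale sum_distrib_left by (simp add: ac_simps)
  also have "\<dots> = (\<Sum>x\<in>S. (s y * s x * om y x) / 2 ^ n * weyl (padd y x) \<phi> u)"
    by (intro sum.cong refl) (simp add: weyl_mult[OF yV iso_V[OF S] u])
  also have "\<dots> = (\<Sum>x\<in>S. s (padd y x) / 2 ^ n * weyl (padd y x) \<phi> u)"
    using S y by (intro sum.cong refl) (auto simp: iso_def)
  also have "\<dots> = proj n S s \<phi> u"
    unfolding proj_def by (rule sum_padd[OF S y, where g="\<lambda>w. s w / 2 ^ n * weyl w \<phi> u"])
  finally show ?thesis .
qed

lemma proj_idem: assumes S: "iso n S s" and c: "card S = 2 ^ n" and u: "u \<in> bits n"
  shows "proj n S s (proj n S s \<phi>) u = proj n S s \<phi> u"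
proof -
  have "proj n S s (proj n S s \<phi>) u = (\<Sum>y\<in>S. (s y * weyl y (proj n S s \<phi>) u) / 2 ^ n)"
    unfolding proj_def[of n S s "proj n S s \<phi>"] by (simp add: ac_simps)
  also have "\<dots> = (\<Sum>y\<in>S. proj n S s \<phi> u / 2 ^ n)"
    by (intro sum.cong refl) (simp add: proj_stab[OF S _ u])
  also have "\<dots> = proj n S s \<phi> u" using c by simp
  finally show ?thesis .
qed

lemma proj_selfadj: assumes S: "iso n S s"
  shows "Defs.inner n (proj n S s \<phi>) \<chi> = Defs.inner n \<phi> (proj n S s \<chi>)"
proof -
  have "Defs.inner n (proj n S s \<phi>) \<chi> = (\<Sum>x\<in>S. cnj (s x / 2 ^ n) * Defs.inner n (weyl x \<phi>) \<chi>)"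
    unfolding proj_def inner_sum_l inner_scale_l ..
  also have "\<dots> = (\<Sum>x\<in>S. (s x / 2 ^ n) * Defs.inner n \<phi> (weyl x \<chi>))"
    by (intro sum.cong refl) (simp add: iso_sign_real[OF S] weyl_selfadj[OF iso_V[OF S]])
  also have "\<dots> = Defs.inner n \<phi> (proj n S s \<chi>)"
    unfolding proj_def inner_sum_r inner_scale_r ..
  finally show ?thesis .
qed

lemma proj_exp: assumes S: "iso n S s" and c: "card S = 2 ^ n"
  shows "Defs.inner n \<psi> (proj n S s \<psi>) = Defs.inner n (proj n S s \<psi>) (proj n S s \<psi>)"
  unfolding proj_selfadj[OF S] by (rule inner_cong_r) (simp add: proj_idem[OF S c])

lemma proj_exp_sum: "Defs.inner n \<psi> (proj n S s \<psi>) = (\<Sum>x\<in>S. (s x / 2 ^ n) * ev n \<psi> x)"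
  unfolding proj_def inner_sum_r inner_scale_r ev_def ..

lemma stab_from_proj: assumes S: "iso n S s" and c: "card S = 2 ^ n"
  and r: "Defs.inner n \<psi> (proj n S s \<psi>) = of_real r" and rpos: "0 < r"
  shows "\<exists>\<phi>. stabilizer_state n \<phi> \<and> (cmod (Defs.inner n \<phi> \<psi>))\<^sup>2 = r"
proof -
  let ?P = "proj n S s \<psi>"
  define k where "k = complex_of_real (1 / sqrt r)"
  define \<phi> where "\<phi> = (\<lambda>v. k * ?P v)"
  have e: "(1 / sqrt r) * (1 / sqrt r) = 1 / r" using rpos
    by (metis abs_of_pos real_sqrt_mult_self times_divide_times_eq mult_1)
  have kk: "cnj k * k = of_real (1 / r)"
    unfolding k_def e[symmetric] by (simp only: complex_cnj_complex_of_real of_real_mult)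
  have PP: "Defs.inner n ?P ?P = of_real r" using proj_exp[OF S c] r by simp
  have pure: "pure_state n \<phi>"
    unfolding pure_state_def \<phi>_def inner_scale_l inner_scale_r PP using rpos
    by (simp add: mult.assoc[symmetric] kk)
  have st: "\<forall>x\<in>S. \<exists>sg\<in>{1, -1::complex}. \<forall>y\<in>bits n. sg * weyl x \<phi> y = \<phi> y"
  proof
    fix x assume x: "x \<in> S"
    have "\<forall>y\<in>bits n. s x * weyl x \<phi> y = \<phi> y"
      unfolding \<phi>_def weyl_scale using proj_stab[OF S x] by (simp add: ac_simps)
    moreover have "s x \<in> {1, -1}" using S x by (auto simp: iso_def)
    ultimately show "\<exists>sg\<in>{1, -1::complex}. \<forall>y\<in>bits n. sg * weyl x \<phi> y = \<phi> y" by blast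
  qed
  have SV: "S \<subseteq> weyl_index n" using S by (simp add: iso_def)
  have stab: "stabilizer_state n \<phi>"
    unfolding stabilizer_state_def using pure st SV c by blast
  have "Defs.inner n \<phi> \<psi> = cnj k * cnj (Defs.inner n \<psi> ?P)"
    unfolding \<phi>_def inner_scale_l inner_cnj ..
  also have "\<dots> = of_real (r / sqrt r)" unfolding r by (simp add: k_def)
  finally have "(cmod (Defs.inner n \<phi> \<psi>))\<^sup>2 = (r / sqrt r)\<^sup>2" by (simp only: norm_of_real power2_abs)
  also have "\<dots> = r" using rpos by (simp add: power_divide power2_eq_square)
  finally show ?thesis using stab by blast
qed


lemma ev_zn: assumes "pure_state n \<psi>" shows "ev n \<psi> (zn n) = 1"
proof -
  have "ev n \<psi> (zn n) = Defs.inner n \<psi> \<psi>"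
    unfolding ev_def by (rule inner_cong_r) (simp add: weyl_zn)
  then show ?thesis using assms by (simp add: pure_state_def)
qed

lemma s_zn: assumes S: "iso n S s" shows "s (zn n) = 1"
proof -
  have z: "zn n \<in> S" using S by (simp add: iso_def)
  have "s (zn n) * s (zn n) * om (zn n) (zn n) = s (padd (zn n) (zn n))" using S z by (auto simp: iso_def)
  then have "s (zn n) * s (zn n) = s (zn n)" by (simp add: om_self[OF zn_V] padd_self[OF zn_V])
  moreover have "s (zn n) = 1 \<or> s (zn n) = -1" using S z by (auto simp: iso_def)
  ultimately show ?thesis by auto
qed

definition tw :: "(bool list \<times> bool list \<Rightarrow> complex) \<Rightarrow> bool list \<times> bool list \<Rightarrow> bool list \<times> bool list \<Rightarrow> complex" where
  "tw s z = (\<lambda>x. s x * (-1) ^ sp z x)"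

lemma four_pow: "(4::complex) ^ n = 2 ^ n * 2 ^ n"
  by (metis mult_2_right numeral_Bit0 power_mult_distrib one_add_one)

lemma sum_delta_S: "finite S \<Longrightarrow> a \<in> S \<Longrightarrow> (\<Sum>x\<in>S. if x = a then f x else 0) = (f a :: complex)"
  by (simp add: sum.delta)

lemma sumR: assumes pure: "pure_state n \<psi>" and S: "iso n S s"
  shows "(\<Sum>z\<in>weyl_index n. Defs.inner n \<psi> (proj n S (tw s z) \<psi>)) = 2 ^ n"
proof -
  have fin: "finite S" by (rule iso_finite[OF S])
  have zS: "zn n \<in> S" using S by (simp add: iso_def)
  have "(\<Sum>z\<in>weyl_index n. Defs.inner n \<psi> (proj n S (tw s z) \<psi>))
      = (\<Sum>z\<in>weyl_index n. \<Sum>x\<in>S. (s x * ev n \<psi> x / 2 ^ n) * (-1) ^ sp z x)"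
    unfolding proj_exp_sum tw_def by (intro sum.cong refl) (simp add: ac_simps)
  also have "\<dots> = (\<Sum>x\<in>S. (s x * ev n \<psi> x / 2 ^ n) * (\<Sum>z\<in>weyl_index n. (-1) ^ sp z x))"
    by (subst sum.swap) (simp add: sum_distrib_left)
  also have "\<dots> = (\<Sum>x\<in>S. if x = zn n then (s x * ev n \<psi> x / 2 ^ n) * 4 ^ n else 0)"
    by (intro sum.cong refl) (simp add: char_sum_V[OF iso_V[OF S]])
  also have "\<dots> = 2 ^ n"
    by (simp add: sum_delta_S[OF fin zS] s_zn[OF S] ev_zn[OF pure] four_pow del: sum.delta)
  finally show ?thesis .
qed

lemma sumR2: assumes pure: "pure_state n \<psi>" and S: "iso n S s"
  shows "(\<Sum>z\<in>weyl_index n. Defs.inner n \<psi> (proj n S (tw s z) \<psi>) * Defs.inner n \<psi> (proj n S (tw s z) \<psi>))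
     = (\<Sum>x\<in>S. ev n \<psi> x * ev n \<psi> x)"
proof -
  have fin: "finite S" by (rule iso_finite[OF S])
  let ?c = "\<lambda>x. s x * ev n \<psi> x / 2 ^ n"
  have "(\<Sum>z\<in>weyl_index n. Defs.inner n \<psi> (proj n S (tw s z) \<psi>) * Defs.inner n \<psi> (proj n S (tw s z) \<psi>))
      = (\<Sum>z\<in>weyl_index n. \<Sum>x\<in>S. \<Sum>y\<in>S. ?c x * ?c y * ((-1) ^ sp z x * (-1) ^ sp z y))"
    unfolding proj_exp_sum tw_def sum_product by (intro sum.cong refl) (simp add: ac_simps)
  also have "\<dots> = (\<Sum>z\<in>weyl_index n. \<Sum>x\<in>S. \<Sum>y\<in>S. ?c x * ?c y * (-1) ^ sp z (padd x y))"
    using S by (intro sum.cong refl) (simp add: pm_sp_padd2[OF iso_V[OF S] iso_V[OF S]])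
  also have "\<dots> = (\<Sum>x\<in>S. \<Sum>z\<in>weyl_index n. \<Sum>y\<in>S. ?c x * ?c y * (-1) ^ sp z (padd x y))"
    by (rule sum.swap)
  also have "\<dots> = (\<Sum>x\<in>S. \<Sum>y\<in>S. \<Sum>z\<in>weyl_index n. ?c x * ?c y * (-1) ^ sp z (padd x y))"
    by (rule sum.cong[OF refl], rule sum.swap)
  also have "\<dots> = (\<Sum>x\<in>S. \<Sum>y\<in>S. if y = x then ?c x * ?c x * 4 ^ n else 0)"
  proof (intro sum.cong refl)
    fix x y assume x: "x \<in> S" and y: "y \<in> S"
    have xV: "x \<in> weyl_index n" and yV: "y \<in> weyl_index n" using x y S by (auto intro: iso_V)
    have "(\<Sum>z\<in>weyl_index n. ?c x * ?c y * (-1) ^ sp z (padd x y)) = ?c x * ?c y * (\<Sum>z\<in>weyl_index n. (-1) ^ sp z (padd x y))"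
      by (simp add: sum_distrib_left)
    also have "\<dots> = ?c x * ?c y * (if padd x y = zn n then 4 ^ n else 0)"
      by (simp only: char_sum_V[OF padd_V[OF xV yV]])
    also have "\<dots> = (if y = x then ?c x * ?c x * 4 ^ n else 0)"
      using padd_eq_zn[OF xV yV] by auto
    finally show "(\<Sum>z\<in>weyl_index n. ?c x * ?c y * (-1) ^ sp z (padd x y)) = (if y = x then ?c x * ?c x * 4 ^ n else 0)" .
  qed
  also have "\<dots> = (\<Sum>x\<in>S. ?c x * ?c x * 4 ^ n)"
    by (intro sum.cong refl) (simp add: sum.delta[OF fin])
  also have "\<dots> = (\<Sum>x\<in>S. (s x * s x) * (ev n \<psi> x * ev n \<psi> x))"
    by (intro sum.cong refl) (simp add: four_pow field_simps)
  also have "\<dots> = (\<Sum>x\<in>S. ev n \<psi> x * ev n \<psi> x)"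
    using S by (intro sum.cong refl) (auto simp: iso_def)
  finally show ?thesis .
qed


definition rr :: "nat \<Rightarrow> (bool list \<Rightarrow> complex) \<Rightarrow> (bool list \<times> bool list) set \<Rightarrow> (bool list \<times> bool list \<Rightarrow> complex)
   \<Rightarrow> bool list \<times> bool list \<Rightarrow> real" where
  "rr n \<psi> S s z = (\<Sum>v\<in>bits n. (cmod (proj n S (tw s z) \<psi> v))\<^sup>2)"

lemma rr_nonneg: "0 \<le> rr n \<psi> S s z" by (simp add: rr_def sum_nonneg)

lemma R_eq: assumes S: "iso n S s" and c: "card S = 2 ^ n" and z: "z \<in> weyl_index n"
  shows "Defs.inner n \<psi> (proj n S (tw s z) \<psi>) = of_real (rr n \<psi> S s z)"
proof -
  have S': "iso n S (tw s z)" unfolding tw_def by (rule iso_twist[OF S z])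
  show ?thesis unfolding proj_exp[OF S' c] inner_self rr_def ..
qed

lemma sum_rr: assumes pure: "pure_state n \<psi>" and S: "iso n S s" and c: "card S = 2 ^ n"
  shows "(\<Sum>z\<in>weyl_index n. rr n \<psi> S s z) = 2 ^ n"
proof -
  have "complex_of_real (\<Sum>z\<in>weyl_index n. rr n \<psi> S s z) = complex_of_real (2 ^ n)"
    unfolding of_real_sum using sumR[OF pure S] by (simp add: R_eq[OF S c])
  then show ?thesis using of_real_eq_iff by blast
qed

lemma sum_rr2: assumes pure: "pure_state n \<psi>" and S: "iso n S s" and c: "card S = 2 ^ n"
  shows "(\<Sum>z\<in>weyl_index n. rr n \<psi> S s z * rr n \<psi> S s z) = (\<Sum>x\<in>S. fv n \<psi> x)"
proof -
  have e: "ev n \<psi> x * ev n \<psi> x = complex_of_real (fv n \<psi> x)" if x: "x \<in> S" for x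
  proof -
    have xV: "x \<in> weyl_index n" using S x by (rule iso_V)
    have h: "ev n \<psi> x = of_real (Re (ev n \<psi> x))" by (rule ev_real[OF xV])
    show ?thesis unfolding fv_Re[OF xV] by (metis h of_real_mult power2_eq_square)
  qed
  have "complex_of_real (\<Sum>z\<in>weyl_index n. rr n \<psi> S s z * rr n \<psi> S s z) = complex_of_real (\<Sum>x\<in>S. fv n \<psi> x)"
    unfolding of_real_sum of_real_mult using sumR2[OF pure S]
    by (simp add: R_eq[OF S c] e cong: sum.cong)
  then show ?thesis using of_real_eq_iff by blast
qed

lemma good_stab: assumes pure: "pure_state n \<psi>" and S: "iso n S s" and c: "card S = 2 ^ n"
  shows "\<exists>\<phi>. stabilizer_state n \<phi> \<and> (\<Sum>x\<in>S. fv n \<psi> x) / 2 ^ n \<le> (cmod (Defs.inner n \<phi> \<psi>))\<^sup>2"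
proof -
  let ?r = "rr n \<psi> S s"
  have ne: "rr n \<psi> S s ` weyl_index n \<noteq> {}" using zn_V by blast
  define m where "m = Max (?r ` weyl_index n)"
  obtain z0 where z0: "z0 \<in> weyl_index n" "?r z0 = m"
    using Max_in[OF finite_imageI[OF finite_V] ne] m_def by auto
  have le: "\<And>z. z \<in> weyl_index n \<Longrightarrow> ?r z \<le> m" unfolding m_def by simp
  have "(\<Sum>x\<in>S. fv n \<psi> x) = (\<Sum>z\<in>weyl_index n. ?r z * ?r z)" by (rule sum_rr2[OF pure S c, symmetric])
  also have "\<dots> \<le> (\<Sum>z\<in>weyl_index n. m * ?r z)"
    by (intro sum_mono mult_right_mono le rr_nonneg)
  also have "\<dots> = m * 2 ^ n" by (simp add: sum_distrib_left[symmetric] sum_rr[OF pure S c])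
  finally have mb: "(\<Sum>x\<in>S. fv n \<psi> x) / 2 ^ n \<le> m" by (simp add: divide_le_eq)
  have zS: "zn n \<in> S" using S by (simp add: iso_def)
  have "fv n \<psi> (zn n) = 1" by (simp add: fv_def ev_zn[OF pure])
  then have "1 \<le> (\<Sum>x\<in>S. fv n \<psi> x)"
    using member_le_sum[of "zn n" S "fv n \<psi>"] zS iso_finite[OF S] fv_nonneg by fastforce
  then have "0 < (\<Sum>x\<in>S. fv n \<psi> x) / 2 ^ n" by simp
  then have mpos: "0 < m" using mb by linarith
  have S': "iso n S (tw s z0)" unfolding tw_def by (rule iso_twist[OF S z0(1)])
  obtain \<phi> where "stabilizer_state n \<phi>" "(cmod (Defs.inner n \<phi> \<psi>))\<^sup>2 = m"
    using stab_from_proj[OF S' c R_eq[OF S c z0(1)]] z0(2) mpos by auto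
  then show ?thesis using mb by auto
qed

lemma fid_le1: assumes pure: "pure_state n \<psi>" and st: "stabilizer_state n \<phi>"
  shows "(cmod (Defs.inner n \<phi> \<psi>))\<^sup>2 \<le> 1"
proof -
  have "(\<Sum>v\<in>bits n. (cmod (\<phi> v))\<^sup>2) = 1" using st
    by (intro norm_one_of_inner) (simp add: stabilizer_state_def pure_state_def)
  moreover have "(\<Sum>v\<in>bits n. (cmod (\<psi> v))\<^sup>2) = 1" using pure
    by (intro norm_one_of_inner) (simp add: pure_state_def)
  ultimately show ?thesis using cauchy_schwarz[of n \<phi> \<psi>] by simp
qed

theorem proposition6p1:
  fixes n :: nat and \<psi> :: "bool list \<Rightarrow> complex"
  assumes "pure_state n \<psi>"
  shows "(4 * eta n \<psi> - 1) / 3 \<le> stabilizer_fidelity n \<psi>"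
proof -
  note pure = assms
  define A where "A = {x\<in>weyl_index n. fv n \<psi> x > 1/2}"
  have AV: "A \<subseteq> weyl_index n" by (auto simp: A_def)
  have Ac: "\<forall>a\<in>A. \<forall>b\<in>A. (-1::complex) ^ sp a b = 1"
    using big_commute[OF pure] by (auto simp: A_def)
  obtain S s where S: "iso n S s" and AS: "A \<subseteq> S" and c: "card S = 2 ^ n"
    using lagrangian_exists[OF AV Ac] by blast
  obtain \<phi> where st: "stabilizer_state n \<phi>" and fb: "(\<Sum>x\<in>S. fv n \<psi> x) / 2 ^ n \<le> (cmod (Defs.inner n \<phi> \<psi>))\<^sup>2"
    using good_stab[OF pure S c] by blast
  have "(4 * eta n \<psi> - 1) / 3 \<le> (\<Sum>x\<in>A. fv n \<psi> x) / 2 ^ n"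
    using eta_bound[OF pure] by (simp add: A_def)
  also have "\<dots> \<le> (\<Sum>x\<in>S. fv n \<psi> x) / 2 ^ n"
    using AS iso_finite[OF S] by (intro divide_right_mono sum_mono2 fv_nonneg) auto
  also have "\<dots> \<le> (cmod (Defs.inner n \<phi> \<psi>))\<^sup>2" by (rule fb)
  also have "\<dots> \<le> stabilizer_fidelity n \<psi>"
    unfolding stabilizer_fidelity_def
  proof (rule cSup_upper)
    show "(cmod (Defs.inner n \<phi> \<psi>))\<^sup>2 \<in> {(cmod (Defs.inner n \<phi> \<psi>))\<^sup>2 |\<phi>. stabilizer_state n \<phi>}"
      using st by blast
    show "bdd_above {(cmod (Defs.inner n \<phi> \<psi>))\<^sup>2 |\<phi>. stabilizer_state n \<phi>}"
      by (rule bdd_aboveI[where M=1]) (auto intro: fid_le1[OF pure])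
  qed
  finally show ?thesis .
qed


end
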